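(* For every positive integer $n$, $$\iota(2^n-1)\leq 2n-1-\left\lfloor \frac{n-1}{2^{\lfloor \frac{\log n}{\log 2}\rfloor}}\right\rfloor-\left\lfloor \frac{\log n}{\log 2}\right\rfloor+\iota(n).$$
   Context: An addition chain producing $N$ is a sequence $1,2,s_3,\ldots,s_k=N$ in which every term after the first is the sum of two (not necessarily distinct) earlier terms; its length is the number of terms excluding the initial $1$. $\iota(N)$ denotes the length of the shortest addition chain producing $N$. $\lfloor\cdot\rfloor$ is the floor function and $\log$ the natural logarithm. *)

theory Defs
  imports Complex_Main
begin

definition addition_chain :: "nat list \<Rightarrow> bool" where
  "addition_chain c \<longleftrightarrow> c \<noteq> [] \<and> c ! 0 = 1 \<and>
     (\<forall>i. 0 < i \<and> i < length c \<longrightarrow> (\<exists>j k. j < i \<and> k < i \<and> c ! i = c ! j + c ! k))"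

definition chain_length :: "nat list \<Rightarrow> nat" where
  "chain_length c = length c - 1"

definition iota :: "nat \<Rightarrow> nat" where
  "iota N = (LEAST k. \<exists>c. addition_chain c \<and> last c = N \<and> chain_length c = k)"

end

theory Submission
  imports Defs
begin

lemma ac_snoc:
  assumes "addition_chain c" "j < length c" "k < length c" "x = c ! j + c ! k"
  shows "addition_chain (c @ [x])"
  unfolding addition_chain_def
proof (intro conjI allI impI)
  show "c @ [x] \<noteq> []" by simp
  show "(c @ [x]) ! 0 = 1" using assms(1) unfolding addition_chain_def by (simp add: nth_append)
  fix i assume i: "0 < i \<and> i < length (c @ [x])"
  show "\<exists>j k. j < i \<and> k < i \<and> (c @ [x]) ! i = (c @ [x]) ! j + (c @ [x]) ! k"
  proof (cases "i < length c")
    case True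
    then obtain j' k' where "j' < i" "k' < i" "c ! i = c ! j' + c ! k'"
      using assms(1) i unfolding addition_chain_def by blast
    then show ?thesis using True by (intro exI[of _ j'] exI[of _ k']) (simp add: nth_append)
  next
    case False
    then have "i = length c" using i by simp
    then show ?thesis using assms by (intro exI[of _ j] exI[of _ k]) (simp add: nth_append)
  qed
qed

fun ch :: "nat \<Rightarrow> nat list" where
  "ch 0 = [1]"
| "ch (Suc k) = ch k @ [2 * (2 ^ (k+1) - 1), 2 ^ (k+2) - 1]"

lemma ch_props: "addition_chain (ch k) \<and> length (ch k) = 2 * k + 1 \<and> last (ch k) = 2 ^ (k+1) - 1"
proof (induction k)
  case 0
  then show ?case by (auto simp add: addition_chain_def)
next
  case (Suc k)
  let ?c = "ch k"
  have l: "length ?c = 2*k+1" and a: "addition_chain ?c" and la: "last ?c = 2^(k+1) - 1"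
    using Suc by auto
  have lastn: "?c ! (2*k) = 2^(k+1) - 1" using l la
    by (metis add_diff_cancel_right' last_conv_nth list.size(3) zero_neq_one add_is_0)
  have a1: "addition_chain (?c @ [2 * (2 ^ (k+1) - 1)])"
    by (rule ac_snoc[OF a, of "2*k" "2*k"]) (use l lastn in auto)
  have c0: "?c ! 0 = 1" using a unfolding addition_chain_def by simp
  have p: "(2::nat) ^ (k+1) \<ge> 1" by simp
  have "addition_chain ((?c @ [2 * (2 ^ (k+1) - 1)]) @ [2 ^ (k+2) - 1])"
  proof (rule ac_snoc[OF a1, of "2*k+1" 0])
    show "2 ^ (k + 2) - 1 = (?c @ [2 * (2 ^ (k + 1) - 1)]) ! (2 * k + 1) + (?c @ [2 * (2 ^ (k + 1) - 1)]) ! 0"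
      using l c0 p by (simp add: nth_append algebra_simps) (metis Suc_diff_Suc less_2_cases_iff not_less_eq_eq one_le_numeral one_le_power mult_le_mono2 nat_mult_1_right numeral_le_iff semiring_norm(69) order_trans Suc_le_eq numeral_2_eq_2 Suc_1 le_antisym)
  qed (use l in auto)
  then show ?case using l by simp
qed

lemma ac_bound:
  assumes "addition_chain c"
  shows "i < length c \<Longrightarrow> c ! i \<le> 2 ^ i"
proof (induction i rule: less_induct)
  case (less i)
  show ?case
  proof (cases "i = 0")
    case True then show ?thesis using assms unfolding addition_chain_def by simp
  next
    case False
    then obtain j k where jk: "j < i" "k < i" "c ! i = c ! j + c ! k"
      using assms less.prems unfolding addition_chain_def by blast
    have "c ! j \<le> 2 ^ j" "c ! k \<le> 2 ^ k" using less jk by auto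
    moreover have "(2::nat) ^ j \<le> 2 ^ (i-1)" "(2::nat) ^ k \<le> 2 ^ (i-1)"
      using jk by (auto intro: power_increasing)
    moreover have "(2::nat) ^ i = 2 ^ (i-1) + 2 ^ (i-1)" using False
      by (metis mult_2 power_eq_if)
    ultimately show ?thesis using jk by linarith
  qed
qed

lemma iota_upper: "n \<ge> 1 \<Longrightarrow> iota (2 ^ n - 1) \<le> 2 * n - 2"
proof -
  assume n: "n \<ge> 1"
  have "addition_chain (ch (n-1)) \<and> last (ch (n-1)) = 2 ^ n - 1 \<and> chain_length (ch (n-1)) = 2*n-2"
    using ch_props[of "n-1"] n by (simp add: chain_length_def)
  then show ?thesis unfolding iota_def by (intro Least_le) blast
qed

lemma iota_lower: "n \<ge> 1 \<Longrightarrow> n \<le> 2 ^ iota n"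
proof -
  assume n: "n \<ge> 1"
  define c where "c = map (\<lambda>i. i + 1) [0..<n]"
  have "addition_chain c"
    unfolding addition_chain_def
  proof (intro conjI allI impI)
    show "c \<noteq> []" "c ! 0 = 1" using n unfolding c_def by auto
    fix i assume i: "0 < i \<and> i < length c"
    show "\<exists>j k. j < i \<and> k < i \<and> c ! i = c ! j + c ! k"
      using i unfolding c_def by (intro exI[of _ "i - 1"] exI[of _ 0]) auto
  qed
  moreover have "last c = n" using n unfolding c_def
    by (simp add: last_map last_conv_nth)
  ultimately have ex: "\<exists>k c. addition_chain c \<and> last c = n \<and> chain_length c = k" by blast
  then obtain d where d: "addition_chain d" "last d = n" "chain_length d = iota n"
    unfolding iota_def using LeastI_ex[OF ex] by blast
  have ne: "d \<noteq> []" using d(1) unfolding addition_chain_def by simp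
  have "last d = d ! (length d - 1)" using ne by (simp add: last_conv_nth)
  also have "\<dots> \<le> 2 ^ (length d - 1)" using ne by (intro ac_bound[OF d(1)]) simp
  finally show ?thesis using d unfolding chain_length_def by simp
qed

theorem mainTheorem12:
  fixes n :: nat
  assumes "n \<ge> 1"
  shows "int (iota (2 ^ n - 1)) \<le>
           2 * int n - 1
           - \<lfloor>real (n - 1) / 2 powr real_of_int \<lfloor>ln (real n) / ln 2\<rfloor>\<rfloor>
           - \<lfloor>ln (real n) / ln 2\<rfloor>
           + int (iota n)"
proof -
  define L where "L = \<lfloor>ln (real n) / ln 2\<rfloor>"
  have lg: "ln (real n) / ln 2 = log 2 (real n)" by (simp add: log_def)
  have npos: "real n > 0" using assms by simp
  have L0: "L \<ge> 0" unfolding L_def lg using assms by simp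
  have "real_of_int L \<le> log 2 (real n)" unfolding L_def lg by simp
  hence pL: "2 powr real_of_int L \<le> real n"
    using npos by (metis le_log_iff less_numeral_extra(1) one_less_numeral_iff semiring_norm(76) log_powr_cancel powr_gt_zero)
  have "log 2 (real n) < real_of_int L + 1" unfolding L_def lg by linarith
  hence pL1: "real n < 2 powr (real_of_int L + 1)"
    using npos by (metis powr_log_cancel powr_less_mono one_less_numeral_iff semiring_norm(76) zero_less_numeral order_less_irrefl numeral_One)
  have pos: "2 powr real_of_int L > 0" by simp
  have "real (n - 1) < 2 * 2 powr real_of_int L"
    using pL1 assms by (simp add: powr_add of_nat_diff)
  hence "real (n - 1) / 2 powr real_of_int L < 2" using pos by (simp add: divide_less_eq)
  hence F: "\<lfloor>real (n - 1) / 2 powr real_of_int L\<rfloor> \<le> 1" by linarith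
  have "2 powr real_of_int L \<le> real (2 ^ iota n)" using pL iota_lower[OF assms]
    by (metis order_trans of_nat_le_iff)
  hence "2 powr real_of_int L \<le> 2 powr real (iota n)" by (simp add: powr_realpow)
  hence Li: "L \<le> int (iota n)" by simp
  have U: "iota (2 ^ n - 1) \<le> 2 * n - 2" by (rule iota_upper[OF assms])
  show ?thesis unfolding L_def[symmetric] using F Li U assms by linarith
qed

end
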